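(* Let $s\in\mathbb R$, $p,q\in(0,+\infty]$ and $\mathcal C\in b^{s,q}_p$. Then $\delta_{\mathcal C}(x)\le \frac dp-s$ for every $x\in\mathbb R^d$, and for every $\gamma\in[-s,-s+\frac dp]$, $$\dim_H\{x\in\mathbb R^d:\ \delta_{\mathcal C}(x)\ge\gamma\}\le d-sp-\gamma p,$$ where $\dim_H$ denotes Hausdorff dimension.
   Context: Fix integers $d\ge1$, $N\ge1$ and bounded functions $\psi^{(1)},\dots,\psi^{(N)}:\mathbb R^d\to\mathbb C$ with fast decay (for every $n>0$ there is $C_n$ with $|\psi^{(i)}(x)|\le C_n(1+|x|)^{-n}$). The associated wavelet system is $\psi^{(i)}_{j,k}(x)=\psi^{(i)}(2^jx-k)$, $1\le i\le N$, $j\ge0$, $k\in\mathbb Z^d$. For $j\ge0$ and $k\in\mathbb Z^d$, $\lambda_{j,k}=\prod_{m=1}^d[k_m2^{-j},(k_m+1)2^{-j})$ is the dyadic cube of generation (scale) $j$; coefficients and wavelets are indexed indifferently by $(i,j,k)$ or by $(i,\lambda)$ with $\lambda=\lambda_{j,k}$, and $\Lambda_j$ denotes the set of pairs $(i,\lambda)$ with $\lambda$ of generation $j$. A sequence is a family $\mathcal C=(c^{(i)}_{j,k})$ of complex numbers. For $\gamma\in\mathbb R$, $x\in\mathbb R^d$, $\mathcal C\in D^\gamma(x)$ means there exist $C>0$ and indices $(i_n,j_n,k_n)$ with $j_n\to+\infty$ and $|c^{(i_n)}_{j_n,k_n}\psi^{(i_n)}_{j_n,k_n}(x)|\ge C2^{\gamma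 j_n}$; the divergence exponent is $\delta_{\mathcal C}(x)=\sup\{\gamma:\mathcal C\in D^\gamma(x)\}$. For $s\in\mathbb R$, $p,q\in(0,\infty]$, the sequence space $b^{s,q}_p$ consists of sequences such that $\varepsilon_j:=\big(\sum_{(i,\lambda)\in\Lambda_j}|c^{(i)}_\lambda 2^{(s-d/p)j}|^p\big)^{1/p}$ (a supremum over $\Lambda_j$ if $p=\infty$) satisfies $(\varepsilon_j)_{j\ge0}\in\ell^q$; it carries the (quasi-)norm $\|(\varepsilon_j)_j\|_{\ell^q}$. *)

theory Defs
  imports "HOL-Analysis.Analysis"
begin

definition hausdorff_pre :: "real \<Rightarrow> real \<Rightarrow> 'a::metric_space set \<Rightarrow> ennreal" where
  "hausdorff_pre s \<delta> A =
     (INF U \<in> {U :: nat \<Rightarrow> 'a set. A \<subseteq> (\<Union>n. U n) \<and>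
                   (\<forall>n. bounded (U n) \<and> diameter (U n) \<le> \<delta>)}.
        (\<Sum>n. ennreal (diameter (U n) powr s)))"

definition hausdorff_outer :: "real \<Rightarrow> 'a::metric_space set \<Rightarrow> ennreal" where
  "hausdorff_outer s A = (SUP \<delta> \<in> {0<..}. hausdorff_pre s \<delta> A)"

definition hausdorff_dim :: "'a::metric_space set \<Rightarrow> ereal" where
  "hausdorff_dim A = Inf {ereal s | s. s > 0 \<and> hausdorff_outer s A = 0}"

definition wavelet :: "(nat \<Rightarrow> real^'d \<Rightarrow> complex) \<Rightarrow> nat \<Rightarrow> nat \<Rightarrow> int^'d \<Rightarrow> real^'d \<Rightarrow> complex" where
  "wavelet \<psi> i j k x = \<psi> i ((2::real) ^ j *\<^sub>R x - (\<chi> m. real_of_int (k $ m)))"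

definition fast_decay :: "(real^'d \<Rightarrow> complex) \<Rightarrow> bool" where
  "fast_decay f \<longleftrightarrow> (\<forall>n::real > 0. \<exists>C. \<forall>x. norm (f x) \<le> C * (1 + norm x) powr (- n))"

definition in_D :: "nat \<Rightarrow> (nat \<Rightarrow> real^'d \<Rightarrow> complex) \<Rightarrow> (nat \<Rightarrow> nat \<Rightarrow> int^'d \<Rightarrow> complex)
                    \<Rightarrow> real \<Rightarrow> real^'d \<Rightarrow> bool" where
  "in_D N \<psi> c \<gamma> x \<longleftrightarrow>
     (\<exists>C > 0. \<exists>idx :: nat \<Rightarrow> nat \<times> nat \<times> (int^'d).
        (\<forall>n. fst (idx n) \<in> {1..N}) \<and>
        filterlim (\<lambda>n. fst (snd (idx n))) at_top sequentially \<and>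
        (\<forall>n. case idx n of (i, j, k) \<Rightarrow>
               norm (c i j k * wavelet \<psi> i j k x) \<ge> C * 2 powr (\<gamma> * real j)))"

definition div_exp :: "nat \<Rightarrow> (nat \<Rightarrow> real^'d \<Rightarrow> complex) \<Rightarrow> (nat \<Rightarrow> nat \<Rightarrow> int^'d \<Rightarrow> complex)
                       \<Rightarrow> real^'d \<Rightarrow> ereal" where
  "div_exp N \<psi> c x = Sup {ereal \<gamma> | \<gamma>. in_D N \<psi> c \<gamma> x}"

definition enn_root :: "ennreal \<Rightarrow> real \<Rightarrow> ennreal" where
  "enn_root S p = (if S = \<infinity> then \<infinity> else ennreal (enn2real S powr (1 / p)))"

definition lp_norm :: "ereal \<Rightarrow> ('a \<Rightarrow> real) \<Rightarrow> 'a set \<Rightarrow> ennreal" where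
  "lp_norm p f A =
     (if p = \<infinity> then (SUP a \<in> A. ennreal \<bar>f a\<bar>)
      else enn_root (infsum (\<lambda>a. ennreal (\<bar>f a\<bar> powr real_of_ereal p)) A) (real_of_ereal p))"

definition div_p :: "nat \<Rightarrow> ereal \<Rightarrow> real" where
  "div_p d p = (if p = \<infinity> then 0 else real d / real_of_ereal p)"

definition besov_eps :: "real \<Rightarrow> ereal \<Rightarrow> nat \<Rightarrow> (nat \<Rightarrow> nat \<Rightarrow> int^'d \<Rightarrow> complex) \<Rightarrow> nat \<Rightarrow> ennreal" where
  "besov_eps s p N c j =
     lp_norm p (\<lambda>(i, k). norm (c i j k) * 2 powr ((s - div_p CARD('d) p) * real j))
             ({1..N} \<times> (UNIV :: (int^'d) set))"

definition in_besov :: "real \<Rightarrow> ereal \<Rightarrow> ereal \<Rightarrow> nat \<Rightarrow> (nat \<Rightarrow> nat \<Rightarrow> int^'d \<Rightarrow> complex) \<Rightarrow> bool" where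
  "in_besov s p q N c \<longleftrightarrow>
     (\<forall>j. besov_eps s p N c j \<noteq> \<infinity>) \<and>
     lp_norm q (\<lambda>j. enn2real (besov_eps s p N c j)) UNIV \<noteq> \<infinity>"

end

theory Submission
  imports Defs
begin

lemma pre_le_infsum:
  fixes E :: "'a::metric_space set" and V :: "'b \<Rightarrow> 'a set"
  assumes I: "countable I" and cov: "E \<subseteq> (\<Union>a\<in>I. V a)"
    and bd: "\<And>a. a \<in> I \<Longrightarrow> bounded (V a) \<and> diameter (V a) \<le> \<delta>" and d0: "\<delta> \<ge> 0"
  shows "hausdorff_pre t \<delta> E \<le> infsum (\<lambda>a. ennreal (diameter (V a) powr t)) I"
proof -
  define U where "U n = (if n \<in> to_nat_on I ` I then V (from_nat_into I n) else {})" for n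
  have Uin: "U \<in> {U :: nat \<Rightarrow> 'a set. E \<subseteq> (\<Union>n. U n) \<and>
                   (\<forall>n. bounded (U n) \<and> diameter (U n) \<le> \<delta>)}"
  proof (safe)
    fix x assume "x \<in> E"
    then obtain a where a: "a \<in> I" "x \<in> V a" using cov by blast
    then have "U (to_nat_on I a) = V a" using I by (simp add: U_def)
    then show "x \<in> (\<Union>n. U n)" using a by blast
  next
    fix n show "bounded (U n)" using bd I by (auto simp: U_def)
  next
    fix n show "diameter (U n) \<le> \<delta>" using bd I d0 by (auto simp: U_def)
  qed
  define g where "g n = ennreal (diameter (U n) powr t)" for n
  have "(g has_sum infsum g UNIV) UNIV"
    by (rule has_sum_infsum, rule nonneg_summable_on_complete) simp
  then have "g sums infsum g UNIV" by (rule has_sum_imp_sums)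
  then have s1: "(\<Sum>n. g n) = infsum g UNIV" by (rule sums_unique[symmetric])
  have "infsum g UNIV = infsum g (to_nat_on I ` I)"
    by (rule infsum_cong_neutral) (auto simp: g_def U_def)
  also have "\<dots> = infsum (g \<circ> to_nat_on I) I"
    by (rule infsum_reindex) (use I in auto)
  also have "\<dots> = infsum (\<lambda>a. ennreal (diameter (V a) powr t)) I"
    by (rule infsum_cong) (use I in \<open>auto simp: g_def U_def\<close>)
  finally have "(\<Sum>n. ennreal (diameter (U n) powr t)) = infsum (\<lambda>a. ennreal (diameter (V a) powr t)) I"
    using s1 by (simp add: g_def)
  then show ?thesis unfolding hausdorff_pre_def
    by (metis (no_types, lifting) INF_lower Uin)
qed

lemma dim_le:
  fixes E :: "'a::metric_space set"
  assumes "r \<ge> 0" and "\<And>t. t > r \<Longrightarrow> hausdorff_outer t E = 0"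
  shows "hausdorff_dim E \<le> ereal r"
  unfolding hausdorff_dim_def
proof (rule dense_ge)
  fix y assume "ereal r < y"
  then show "Inf {ereal s | s. s > 0 \<and> hausdorff_outer s E = 0} \<le> y"
  proof (cases y)
    case (real t)
    then have "t > r" using \<open>ereal r < y\<close> by simp
    then show ?thesis using assms real by (intro Inf_lower) auto
  qed auto
qed

lemma two_powr_lt1: "u < 0 \<Longrightarrow> (2::real) powr u < 1"
  using powr_less_mono[of u 0 "2::real"] by simp

lemma geo_bound:
  fixes \<rho> :: real assumes "0 \<le> \<rho>" "\<rho> < 1"
  shows "(\<Sum>j=J..M. \<rho>^j) \<le> \<rho>^J / (1 - \<rho>)"
proof -
  have "(\<Sum>j=J..M. \<rho>^j) = (if M < J then 0 else (\<rho>^J - \<rho>^Suc M)/(1-\<rho>))"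
    using assms by (simp add: sum_gp)
  also have "\<dots> \<le> \<rho>^J / (1 - \<rho>)" using assms
    by (auto simp: divide_right_mono)
  finally show ?thesis .
qed

lemma eventually_small:
  fixes \<rho> :: real assumes "0 \<le> \<rho>" "\<rho> < 1" "e > 0"
  shows "\<exists>J0. \<forall>J\<ge>J0. \<rho>^J \<le> e"
proof -
  have "(\<lambda>n. \<rho>^n) \<longlonglongrightarrow> 0" using assms by (intro LIMSEQ_power_zero) auto
  then have "eventually (\<lambda>n. \<rho>^n < e) sequentially" using assms by (simp add: order_tendstoD)
  then show ?thesis unfolding eventually_sequentially by (meson less_imp_le)
qed

lemma cover_null:
  fixes E :: "'a::real_normed_vector set" and Z :: "nat \<Rightarrow> 'a set"
  assumes fin: "\<And>j. finite (Z j)" and card: "\<And>j. real (card (Z j)) \<le> K * 2 powr (\<alpha> * real j)"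
    and b0: "\<beta> > 0" and t0: "t > 0" and tb: "t * \<beta> > \<alpha>"
    and cov: "\<And>x J. x \<in> E \<Longrightarrow> \<exists>j\<ge>J. \<exists>z\<in>Z j. dist x z \<le> 2 powr (- \<beta> * real j)"
  shows "hausdorff_outer t E = 0"
proof -
  define \<rho> where "\<rho> = (2::real) powr (\<alpha> - t * \<beta>)"
  have \<rho>0: "0 < \<rho>" and \<rho>1: "\<rho> < 1" using tb by (auto simp: \<rho>_def intro: two_powr_lt1)
  define \<sigma> where "\<sigma> = (2::real) powr (- \<beta>)"
  have \<sigma>0: "0 < \<sigma>" and \<sigma>1: "\<sigma> < 1" using b0 by (auto simp: \<sigma>_def intro: two_powr_lt1)
  define K0 where "K0 = max K 0 * 2 powr t"
  have K0: "K0 \<ge> 0" by (simp add: K0_def)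
  have pw: "2 powr (u * real j) = (2 powr u)^j" for u :: real and j :: nat
    by (simp add: powr_power mult.commute)
  have pre0: "hausdorff_pre t \<delta> E = 0" if d0: "\<delta> > 0" for \<delta>
  proof -
    have "hausdorff_pre t \<delta> E \<le> 0 + ennreal \<eta>" if e0: "\<eta> > 0" for \<eta>
    proof -
      obtain J1 where J1: "\<And>J. J \<ge> J1 \<Longrightarrow> \<sigma>^J \<le> \<delta>/2"
        using eventually_small[OF _ \<sigma>1, of "\<delta>/2"] \<sigma>0 d0 by auto
      obtain J2 where J2: "\<And>J. J \<ge> J2 \<Longrightarrow> \<rho>^J \<le> \<eta> / (K0+1) * (1-\<rho>)"
        using eventually_small[OF _ \<rho>1, of "\<eta> / (K0+1) * (1-\<rho>)"] \<rho>0 \<rho>1 e0 K0 by auto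
      define J where "J = max J1 J2"
      define I where "I = (SIGMA j:{J..}. Z j)"
      define V where "V = (\<lambda>(j::nat,z::'a). cball z (2 powr (- \<beta> * real j)))"
      have rad: "2 powr (- \<beta> * real j) = \<sigma>^j" for j
        using pw[of "-\<beta>" j] by (simp add: \<sigma>_def)
      have cI: "countable I" unfolding I_def
        by (intro countable_SIGMA) (auto intro: countable_finite fin)
      have cv: "E \<subseteq> (\<Union>a\<in>I. V a)"
      proof
        fix x assume "x \<in> E"
        then obtain j z where "j \<ge> J" "z \<in> Z j" "dist x z \<le> 2 powr (- \<beta> * real j)"
          using cov by blast
        then show "x \<in> (\<Union>a\<in>I. V a)" unfolding I_def V_def
          by (intro UN_I[of "(j,z)"]) (auto simp: dist_commute)
      qed
      have diam: "diameter (V (j,z)) \<le> 2 * \<sigma>^j" for j z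
      proof -
        have eq: "V (j,z) = cball z (\<sigma> ^ j)" using rad[of j] by (simp add: V_def)
        show ?thesis unfolding eq
      proof (rule diameter_le)
        show "cball z (\<sigma> ^ j) \<noteq> {} \<or> 0 \<le> 2 * \<sigma> ^ j" using \<sigma>0 by simp
        fix x y assume "x \<in> cball z (\<sigma> ^ j)" "y \<in> cball z (\<sigma> ^ j)"
        then have "dist x z \<le> \<sigma>^j" "dist y z \<le> \<sigma>^j" by (auto simp: dist_commute)
        then have "dist x y \<le> 2 * \<sigma>^j" using dist_triangle[of x y z] by (simp add: dist_commute)
        then show "norm (x - y) \<le> 2 * \<sigma> ^ j" by (simp add: dist_norm)
      qed
      qed
      have bd: "bounded (V a) \<and> diameter (V a) \<le> \<delta>" if aI: "a \<in> I" for a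
      proof -
        obtain j z where a: "a = (j,z)" "j \<ge> J" using aI unfolding I_def by blast
        have "\<sigma>^j \<le> \<delta>/2" using J1[of j] a by (simp add: J_def)
        then show ?thesis using diam[of j z] a by (auto simp: V_def)
      qed
      have step1: "hausdorff_pre t \<delta> E \<le> infsum (\<lambda>a. ennreal (diameter (V a) powr t)) I"
        by (rule pre_le_infsum[OF cI cv bd]) (use d0 in auto)
      have "infsum (\<lambda>a. ennreal (diameter (V a) powr t)) I \<le> ennreal \<eta>"
      proof (rule infsum_le_finite_sums)
        show "(\<lambda>a. ennreal (diameter (V a) powr t)) summable_on I"
          by (rule nonneg_summable_on_complete) simp
      next
        fix F assume F: "finite F" "F \<subseteq> I"
        define M where "M = Max (insert J (fst ` F))"
        have FS: "F \<subseteq> (SIGMA j:{J..M}. Z j)"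
        proof
          fix a assume "a \<in> F"
          then show "a \<in> (SIGMA j:{J..M}. Z j)" using F
            unfolding M_def I_def by (cases a) (force intro!: Max_ge)
        qed
        have finS: "finite (SIGMA j:{J..M}. Z j)" by (intro finite_SigmaI) (auto simp: fin)
        have eqS: "(\<Sum>a\<in>(SIGMA j:{J..M}. Z j). (2 * \<sigma>^(fst a)) powr t)
             = (\<Sum>j=J..M. real (card (Z j)) * (2 * \<sigma>^j) powr t)"
        proof -
          have "(\<Sum>j=J..M. real (card (Z j)) * (2 * \<sigma>^j) powr t) = (\<Sum>j=J..M. \<Sum>z\<in>Z j. (2 * \<sigma>^j) powr t)"
            by (intro sum.cong refl) simp
          also have "\<dots> = (\<Sum>a\<in>(SIGMA j:{J..M}. Z j). (2 * \<sigma>^(fst a)) powr t)"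
          proof -
            have "(\<Sum>j=J..M. \<Sum>z\<in>Z j. (2 * \<sigma>^j) powr t) = (\<Sum>(j,z)\<in>(SIGMA j:{J..M}. Z j). (2 * \<sigma>^j) powr t)"
              by (rule sum.Sigma) (auto intro: fin)
            also have "\<dots> = (\<Sum>a\<in>(SIGMA j:{J..M}. Z j). (2 * \<sigma>^(fst a)) powr t)"
              by (rule sum.cong) auto
            finally show ?thesis .
          qed
          finally show ?thesis by (rule sym)
        qed
        have "(\<Sum>a\<in>F. ennreal (diameter (V a) powr t)) \<le> (\<Sum>a\<in>(SIGMA j:{J..M}. Z j). ennreal (diameter (V a) powr t))"
          by (rule sum_mono2[OF finS FS]) auto
        also have "\<dots> \<le> (\<Sum>a\<in>(SIGMA j:{J..M}. Z j). ennreal ((2 * \<sigma>^(fst a)) powr t))"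
        proof (rule sum_mono)
          fix a assume "a \<in> (SIGMA j:{J..M}. Z j)"
          obtain j z where a: "a = (j,z)" by (cases a)
          have "diameter (V a) \<ge> 0" by (simp add: V_def a diameter_ge_0)
          then show "ennreal (diameter (V a) powr t) \<le> ennreal ((2 * \<sigma>^(fst a)) powr t)"
            using diam[of j z] t0 a by (auto intro!: ennreal_leI powr_mono2)
        qed
        also have "\<dots> = ennreal (\<Sum>a\<in>(SIGMA j:{J..M}. Z j). (2 * \<sigma>^(fst a)) powr t)"
          by (rule sum_ennreal) simp
        also have "\<dots> = ennreal (\<Sum>j=J..M. real (card (Z j)) * (2 * \<sigma>^j) powr t)"
          by (simp only: eqS)
        finally have ennb: "(\<Sum>a\<in>F. ennreal (diameter (V a) powr t)) \<le> ennreal (\<Sum>j=J..M. real (card (Z j)) * (2 * \<sigma>^j) powr t)" .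
        have "(\<Sum>j=J..M. real (card (Z j)) * (2 * \<sigma>^j) powr t) \<le> (\<Sum>j=J..M. K0 * \<rho>^j)"
        proof (rule sum_mono)
          fix j assume "j \<in> {J..M}"
          have "(2 * \<sigma>^j) powr t = 2 powr t * (\<sigma>^j) powr t" using \<sigma>0 by (simp add: powr_mult)
          also have "(\<sigma>^j) powr t = 2 powr (- \<beta> * real j * t)" by (simp only: rad[symmetric] powr_powr)
          finally have e1: "(2 * \<sigma>^j) powr t = 2 powr t * 2 powr (- \<beta> * real j * t)" .
          have ex: "\<alpha> * real j + (- \<beta> * real j * t) = (\<alpha> - t * \<beta>) * real j" by (simp add: algebra_simps)
          have e2: "2 powr (\<alpha> * real j) * 2 powr (- \<beta> * real j * t) = \<rho>^j"
            unfolding \<rho>_def pw[symmetric] powr_add[symmetric] ex ..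
          have "real (card (Z j)) * (2 * \<sigma>^j) powr t \<le> max K 0 * 2 powr (\<alpha> * real j) * (2 * \<sigma>^j) powr t"
          proof (rule mult_right_mono)
            have "K * 2 powr (\<alpha> * real j) \<le> max K 0 * 2 powr (\<alpha> * real j)"
              by (rule mult_right_mono) auto
            then show "real (card (Z j)) \<le> max K 0 * 2 powr (\<alpha> * real j)" using card[of j] by linarith
          qed simp
          also have "\<dots> = K0 * \<rho>^j" unfolding e1 K0_def e2[symmetric] by (simp only: mult_ac)
          finally show "real (card (Z j)) * (2 * \<sigma>^j) powr t \<le> K0 * \<rho>^j" .
        qed
        also have "\<dots> = K0 * (\<Sum>j=J..M. \<rho>^j)" by (simp add: sum_distrib_left)
        also have "\<dots> \<le> K0 * (\<rho>^J / (1-\<rho>))"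
          by (intro mult_left_mono geo_bound) (use \<rho>0 \<rho>1 K0 in auto)
        also have "\<dots> \<le> K0 * (\<eta> / (K0+1))"
        proof -
          have "\<rho>^J \<le> \<eta> / (K0+1) * (1-\<rho>)" using J2 by (simp add: J_def)
          then have "\<rho>^J / (1-\<rho>) \<le> \<eta> / (K0+1)" using \<rho>1 K0
            by (simp add: pos_divide_le_eq)
          then show ?thesis using K0 by (intro mult_left_mono) auto
        qed
        also have "\<dots> \<le> \<eta>"
        proof -
          have "K0 * (\<eta> / (K0+1)) = \<eta> * (K0 / (K0+1))" by simp
          also have "\<dots> \<le> \<eta> * 1" using K0 e0 by (intro mult_left_mono) auto
          finally show ?thesis by simp
        qed
        finally have "(\<Sum>j=J..M. real (card (Z j)) * (2 * \<sigma>^j) powr t) \<le> \<eta>" .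
        then show "(\<Sum>a\<in>F. ennreal (diameter (V a) powr t)) \<le> ennreal \<eta>"
          using ennb by (meson ennreal_leI order_trans)
      qed
      then show ?thesis using order_trans[OF step1] by simp
    qed
    then have "hausdorff_pre t \<delta> E \<le> 0" by (rule ennreal_le_epsilon) auto
    then show ?thesis by simp
  qed
  have "(SUP \<delta> \<in> {0<..}. hausdorff_pre t \<delta> E) \<le> 0"
    by (rule SUP_least) (simp add: pre0)
  then show ?thesis unfolding hausdorff_outer_def by simp
qed

lemma grows:
  assumes "a > 0"
  shows "\<exists>J0::nat. \<forall>j\<ge>J0. M \<le> 2 powr (a * real j)"
proof -
  have x1: "(1::real) < 2 powr a" using powr_less_mono[of 0 a 2] assms by simp
  obtain n where n: "M < (2 powr a)^n" using real_arch_pow[OF x1] by blast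
  have "M \<le> 2 powr (a * real j)" if "j \<ge> n" for j
  proof -
    have "(2 powr a)^n \<le> (2 powr a)^j" using that x1 by (intro power_increasing) auto
    also have "\<dots> = 2 powr (a * real j)" by (simp add: powr_power mult.commute)
    finally show ?thesis using n by simp
  qed
  then show ?thesis by blast
qed

lemma enn_sum_le_infsum:
  fixes f :: "'a \<Rightarrow> ennreal"
  assumes "finite F" "F \<subseteq> A"
  shows "sum f F \<le> infsum f A"
proof -
  have "infsum f F \<le> infsum f A"
    by (rule infsum_mono_neutral) (use assms in \<open>auto intro: nonneg_summable_on_complete\<close>)
  then show ?thesis using assms by simp
qed

lemma lp_bounded:
  fixes f :: "'a \<Rightarrow> real"
  assumes q0: "0 < q" and fin: "lp_norm q f UNIV \<noteq> \<infinity>"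
  shows "\<exists>B. \<forall>j. \<bar>f j\<bar> \<le> B"
proof (cases "q = \<infinity>")
  case True
  define S where "S = (SUP a \<in> UNIV. ennreal \<bar>f a\<bar>)"
  have S: "S \<noteq> \<infinity>" using fin True by (simp add: lp_norm_def S_def)
  have "\<bar>f j\<bar> \<le> enn2real S" for j
  proof -
    have "ennreal \<bar>f j\<bar> \<le> S" unfolding S_def by (rule SUP_upper) simp
    then have "enn2real (ennreal \<bar>f j\<bar>) \<le> enn2real S" using S by (intro enn2real_mono) (auto simp: top.not_eq_extremum)
    then show ?thesis by simp
  qed
  then show ?thesis by blast
next
  case False
  then obtain Q where q: "q = ereal Q" using q0 by (cases q) auto
  have Q0: "Q > 0" using q0 q by simp
  define X where "X = infsum (\<lambda>a. ennreal (\<bar>f a\<bar> powr Q)) UNIV"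
  have X: "X \<noteq> \<infinity>" using fin q by (auto simp: lp_norm_def X_def enn_root_def split: if_splits)
  have "\<bar>f j\<bar> \<le> enn2real X powr (1/Q)" for j
  proof -
    have "sum (\<lambda>a. ennreal (\<bar>f a\<bar> powr Q)) {j} \<le> X" unfolding X_def
      by (rule enn_sum_le_infsum) auto
    then have "ennreal (\<bar>f j\<bar> powr Q) \<le> X" by simp
    then have "enn2real (ennreal (\<bar>f j\<bar> powr Q)) \<le> enn2real X" using X by (intro enn2real_mono) (auto simp: top.not_eq_extremum)
    then have "\<bar>f j\<bar> powr Q \<le> enn2real X" by simp
    then have "(\<bar>f j\<bar> powr Q) powr (1/Q) \<le> enn2real X powr (1/Q)" using Q0 by (intro powr_mono2) auto
    then show ?thesis using Q0 by (simp add: powr_powr)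
  qed
  then show ?thesis by blast
qed

lemma lp_finite_bound:
  fixes f :: "'a \<Rightarrow> real"
  assumes le: "lp_norm (ereal P) f A \<le> ennreal B" and P0: "P > 0" and B0: "B \<ge> 0"
    and F: "finite F" "F \<subseteq> A"
  shows "(\<Sum>a\<in>F. \<bar>f a\<bar> powr P) \<le> B powr P"
proof -
  define X where "X = infsum (\<lambda>a. ennreal (\<bar>f a\<bar> powr P)) A"
  have lp: "lp_norm (ereal P) f A = enn_root X P" by (simp add: lp_norm_def X_def)
  have X: "X \<noteq> \<infinity>" using le unfolding lp enn_root_def by (auto split: if_splits simp: top_unique)
  then have "ennreal (enn2real X powr (1/P)) \<le> ennreal B" using le unfolding lp enn_root_def by simp
  then have "enn2real X powr (1/P) \<le> B" using B0 by (simp add: ennreal_le_iff)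
  then have "(enn2real X powr (1/P)) powr P \<le> B powr P" using P0 by (intro powr_mono2) auto
  then have XB: "enn2real X \<le> B powr P" using P0 by (simp add: powr_powr)
  have "sum (\<lambda>a. ennreal (\<bar>f a\<bar> powr P)) F \<le> X" unfolding X_def
    by (rule enn_sum_le_infsum) (use F in auto)
  then have "ennreal (\<Sum>a\<in>F. \<bar>f a\<bar> powr P) \<le> X" by simp
  then have "enn2real (ennreal (\<Sum>a\<in>F. \<bar>f a\<bar> powr P)) \<le> enn2real X"
    using X by (intro enn2real_mono) (auto simp: top.not_eq_extremum)
  then have "(\<Sum>a\<in>F. \<bar>f a\<bar> powr P) \<le> enn2real X" by (simp add: sum_nonneg)
  then show ?thesis using XB by linarith
qed

lemma lp_inf_bound:
  fixes f :: "'a \<Rightarrow> real"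
  assumes le: "lp_norm \<infinity> f A \<le> ennreal B" and B0: "B \<ge> 0" and a: "a \<in> A"
  shows "\<bar>f a\<bar> \<le> B"
proof -
  have "ennreal \<bar>f a\<bar> \<le> lp_norm \<infinity> f A" unfolding lp_norm_def using a by (simp, intro SUP_upper) 
  then have "ennreal \<bar>f a\<bar> \<le> ennreal B" using le by (rule order_trans)
  then show ?thesis using B0 by (simp add: ennreal_le_iff)
qed

lemma psi_unif:
  fixes \<psi> :: "nat \<Rightarrow> real^'d \<Rightarrow> complex"
  assumes fd: "\<And>i. i \<in> {1..N} \<Longrightarrow> fast_decay (\<psi> i)" and n0: "n0 > 0"
  shows "\<exists>C\<ge>1. \<forall>i\<in>{1..N}. \<forall>y. norm (\<psi> i y) \<le> C * (1 + norm y) powr (- n0)"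
proof -
  have "\<forall>i\<in>{1..N}. \<exists>C. \<forall>y. norm (\<psi> i y) \<le> C * (1 + norm y) powr (- n0)"
    using fd n0 unfolding fast_decay_def by blast
  then obtain Cf where Cf: "\<And>i y. i \<in> {1..N} \<Longrightarrow> norm (\<psi> i y) \<le> Cf i * (1 + norm y) powr (- n0)"
    by metis
  define C where "C = 1 + (\<Sum>i\<in>{1..N}. \<bar>Cf i\<bar>)"
  have "norm (\<psi> i y) \<le> C * (1 + norm y) powr (- n0)" if i: "i \<in> {1..N}" for i y
  proof -
    have "\<bar>Cf i\<bar> \<le> (\<Sum>i\<in>{1..N}. \<bar>Cf i\<bar>)"
      by (rule member_le_sum) (use i in auto)
    then have "Cf i \<le> C" unfolding C_def by linarith
    then have "Cf i * (1 + norm y) powr (- n0) \<le> C * (1 + norm y) powr (- n0)"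
      by (intro mult_right_mono) auto
    then show ?thesis using Cf[OF i, of y] by linarith
  qed
  moreover have "C \<ge> 1" unfolding C_def by (simp add: sum_nonneg)
  ultimately show ?thesis by blast
qed

lemma key_ineq:
  fixes a b u C Cp KK nn \<epsilon> g g' w :: real and j :: nat
  assumes C0: "C > 0" and Cp: "Cp \<ge> 1" and KK: "KK \<ge> 0" and nn: "nn > 0" and a0: "a \<ge> 0"
    and u1: "u \<ge> 1"
    and h1: "C * 2 powr (g' * j) \<le> a * b"
    and h2: "a \<le> KK * 2 powr (w * j)"
    and h3: "b \<le> Cp * u powr (- nn)"
    and h4: "KK * Cp / C \<le> 2 powr (1 * real j)"
    and h5: "Cp / C \<le> 2 powr ((g' - g) * j)"
    and hn: "1 + (w - g') \<le> nn * \<epsilon>"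
  shows "2 powr (g * j) \<le> a \<and> u \<le> 2 powr (\<epsilon> * j)"
proof
  define v where "v = u powr (- nn)"
  have v0: "v > 0" using u1 by (simp add: v_def)
  have v1: "v \<le> 1" unfolding v_def using powr_mono[of "-nn" 0 u] nn u1 by simp
  have abv: "a * b \<le> a * (Cp * v)" using h3 a0 by (intro mult_left_mono) (auto simp: v_def)
  have e1: "2 powr (g' * j) = 2 powr ((g' - g) * j) * 2 powr (g * j)"
    by (simp add: powr_add[symmetric] algebra_simps)
  have "Cp \<le> C * 2 powr ((g' - g) * j)" using h5 C0 by (simp add: divide_le_eq mult.commute)
  then have "Cp * 2 powr (g * j) \<le> C * 2 powr ((g' - g) * j) * 2 powr (g * j)"
    by (intro mult_right_mono) auto
  also have "\<dots> = C * 2 powr (g' * j)" by (simp add: e1)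
  also have "\<dots> \<le> a * (Cp * v)" using h1 abv by linarith
  also have "\<dots> \<le> a * Cp" using v1 v0 a0 Cp by (intro mult_left_mono) (auto intro: mult_left_le)
  finally have "Cp * 2 powr (g * j) \<le> Cp * a" by (simp add: mult.commute)
  then show "2 powr (g * j) \<le> a" using Cp by simp
  have "C * 2 powr (g' * j) \<le> KK * 2 powr (w * j) * (Cp * v)"
    using h1 abv h2 v0 Cp by (smt (verit) mult_right_mono mult_nonneg_nonneg)
  then have "C * 2 powr (g' * j) * u powr nn \<le> KK * 2 powr (w * j) * (Cp * v) * u powr nn"
    by (intro mult_right_mono) auto
  also have "KK * 2 powr (w * j) * (Cp * v) * u powr nn = (KK * Cp) * 2 powr (w * j)"
  proof -
    have "v * u powr nn = 1" using u1 by (simp add: v_def powr_add[symmetric])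
    then show ?thesis by (metis mult.assoc mult.commute mult.right_neutral)
  qed
  also have "\<dots> \<le> (C * 2 powr (1 * real j)) * 2 powr (w * j)"
    using h4 C0 by (intro mult_right_mono) (auto simp: divide_le_eq mult.commute)
  finally have "C * (2 powr (g' * j) * u powr nn) \<le> C * (2 powr (1 * real j) * 2 powr (w * j))"
    by (simp add: mult_ac)
  then have "2 powr (g' * j) * u powr nn \<le> 2 powr (1 * real j) * 2 powr (w * j)"
    using C0 by simp
  also have "\<dots> = 2 powr (g' * j) * 2 powr ((1 + (w - g')) * j)"
    by (simp add: powr_add[symmetric] algebra_simps)
  finally have "u powr nn \<le> 2 powr ((1 + (w - g')) * j)" by simp
  also have "\<dots> \<le> 2 powr ((nn * \<epsilon>) * j)" using hn by (intro powr_mono mult_right_mono) auto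
  finally have "(u powr nn) powr (1/nn) \<le> (2 powr ((nn * \<epsilon>) * j)) powr (1/nn)"
    using nn by (intro powr_mono2) auto
  then show "u \<le> 2 powr (\<epsilon> * j)" using nn u1 by (simp add: powr_powr)
qed

lemma count_bound:
  fixes h :: "'i \<Rightarrow> real"
  assumes S: "\<And>F. finite F \<Longrightarrow> F \<subseteq> A \<Longrightarrow> (\<Sum>a\<in>F. h a) \<le> K"
    and lb: "\<And>a. a \<in> A \<Longrightarrow> m \<le> h a" and m0: "m > 0"
  shows "finite A \<and> real (card A) \<le> K / m"
proof -
  have cb: "real (card F) \<le> K / m" if "finite F" "F \<subseteq> A" for F
  proof -
    have "real (card F) * m \<le> (\<Sum>a\<in>F. h a)" using that lb by (intro sum_bounded_below) auto
    also have "\<dots> \<le> K" using S that by blast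
    finally show ?thesis using m0 by (simp add: le_divide_eq)
  qed
  have fA: "finite A"
  proof (rule ccontr)
    assume "infinite A"
    then obtain F where F: "finite F" "card F = nat \<lceil>K/m\<rceil> + 1" "F \<subseteq> A"
      using infinite_arbitrarily_large by blast
    have "real (card F) \<le> K / m" using cb F by blast
    moreover have "real (card F) > K / m" using F(2) by linarith
    ultimately show False by simp
  qed
  then show ?thesis using cb by blast
qed

lemma dim_le_card:
  fixes E :: "(real^'d) set"
  shows "hausdorff_dim E \<le> ereal (real CARD('d))"
proof (rule dim_le)
  define D where "D = real CARD('d)"
  have D1: "D \<ge> 1" by (simp add: D_def)
  show "0 \<le> real CARD('d)" by simp
  fix t assume tD: "real CARD('d) < t"
  then have tD': "D < t" by (simp add: D_def)
  define a :: nat where "a = nat \<lceil>(t + D) / (t - D)\<rceil> + 1"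
  have aq: "real a > (t + D) / (t - D)" unfolding a_def by linarith
  have q1: "(t + D) / (t - D) \<ge> 1" using tD' D1 by (simp add: le_divide_eq)
  have "1 \<le> \<lceil>(t + D) / (t - D)\<rceil>" using q1 by linarith
  then have "a \<ge> 2" unfolding a_def by linarith
  then have a2: "real a \<ge> 2" by simp
  have ta: "real a * (t - D) > t + D" using aq tD' by (simp add: divide_less_eq)
  define L where "L j = (2::int)^((a+1)*j) + 1" for j
  define Z where "Z j = (\<lambda>f. (\<chi> m. real_of_int (f m) / 2^(a*j)) :: real^'d) ` (PiE UNIV (\<lambda>_. {- L j..L j}))" for j
  show "hausdorff_outer t E = 0"
  proof (rule cover_null[of Z "5 ^ CARD('d)" "real (a+1) * D"])
    fix j
    show "finite (Z j)" unfolding Z_def by (intro finite_imageI finite_PiE) auto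
    have "card (Z j) \<le> card (PiE (UNIV :: 'd set) (\<lambda>_. {- L j..L j}))"
      unfolding Z_def by (rule card_image_le) (intro finite_PiE, auto)
    also have "\<dots> = (nat (2 * L j + 1)) ^ CARD('d)" by (simp add: card_PiE)
    finally have c1: "real (card (Z j)) \<le> real (nat (2 * L j + 1)) ^ CARD('d)"
      by (metis of_nat_le_iff of_nat_power)
    have "real (nat (2 * L j + 1)) = 2 * 2^((a+1)*j) + 3" unfolding L_def by simp
    also have "\<dots> \<le> 5 * 2^((a+1)*j)" using one_le_power[of "2::real" "(a+1)*j"] by simp
    finally have "real (nat (2 * L j + 1)) ^ CARD('d) \<le> (5 * 2^((a+1)*j)) ^ CARD('d)"
      by (intro power_mono) auto
    also have "\<dots> = 5 ^ CARD('d) * 2 ^ ((a+1)*j*CARD('d))" by (simp add: power_mult_distrib power_mult)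
    also have "(2::real) ^ ((a+1)*j*CARD('d)) = 2 powr (real (a+1) * D * real j)"
      by (subst powr_realpow[symmetric]) (auto simp: D_def algebra_simps)
    finally show "real (card (Z j)) \<le> 5 ^ CARD('d) * 2 powr (real (a + 1) * D * real j)"
      using c1 by linarith
  next
    show "0 < real a - 1" using a2 by simp
  next
    show "0 < t" using tD' D1 by simp
  next
    show "real (a + 1) * D < t * (real a - 1)" using ta by (simp add: algebra_simps)
  next
    fix x J assume "x \<in> E"
    define M where "M = D + (\<Sum>m\<in>UNIV. \<bar>x$m\<bar>)"
    obtain j0 where j0: "\<And>j. j \<ge> j0 \<Longrightarrow> M \<le> 2 powr (1 * real j)" using grows[of 1 M] by auto
    define j where "j = max J j0"
    have jJ: "j \<ge> J" by (simp add: j_def)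
    have Mj: "M \<le> 2^j" using j0[of j] by (simp add: j_def powr_realpow)
    have xm: "\<bar>x$m\<bar> \<le> 2^j" for m
    proof -
      have "\<bar>x$m\<bar> \<le> (\<Sum>m\<in>UNIV. \<bar>x$m\<bar>)" by (rule member_le_sum) auto
      then show ?thesis using Mj D1 unfolding M_def by linarith
    qed
    have Dj: "D \<le> 2^j" using Mj unfolding M_def by (smt (verit) sum_nonneg abs_ge_zero)
    define s :: real where "s = 2^(a*j)"
    have s0: "s > 0" by (simp add: s_def)
    define f where "f m = \<lfloor>s * x$m\<rfloor>" for m
    define z :: "real^'d" where "z = (\<chi> m. real_of_int (f m) / 2^(a*j))"
    have fL: "f m \<in> {- L j..L j}" for m
    proof -
      have "\<bar>s * x$m\<bar> \<le> s * 2^j" using xm[of m] s0 by (simp add: abs_mult)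
      also have "s * 2^j = 2^((a+1)*j)" by (simp add: s_def power_add[symmetric] algebra_simps)
      finally have b: "\<bar>s * x$m\<bar> \<le> 2^((a+1)*j)" .
      have "real_of_int (f m) \<le> s * x$m" "s * x$m < real_of_int (f m) + 1" unfolding f_def by linarith+
      then have r1: "real_of_int (f m) \<le> 2^((a+1)*j)" and r2: "- (2^((a+1)*j)) - 1 \<le> real_of_int (f m)" using b by linarith+
      have "f m \<le> 2^((a+1)*j)" using r1 by (metis of_int_le_iff of_int_numeral of_int_power)
      moreover have "- (2^((a+1)*j)) - 1 \<le> f m"
      proof -
        have PP: "real_of_int ((2::int)^((a+1)*j)) = 2^((a+1)*j)" by simp
        have "real_of_int (- ((2::int)^((a+1)*j)) - 1) \<le> s * x$m"
          unfolding of_int_diff of_int_minus PP using b by simp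
        then show ?thesis unfolding f_def le_floor_iff .
      qed
      ultimately have "f m \<le> 2^((a+1)*j) \<and> - (2^((a+1)*j)) - 1 \<le> f m" by blast
      then show ?thesis unfolding L_def by simp
    qed
    have zZ: "z \<in> Z j" unfolding Z_def z_def
    proof (rule image_eqI[of _ _ f])
      have fL2: "- L j \<le> f m" "f m \<le> L j" for m using fL[of m] by auto
      show "f \<in> UNIV \<rightarrow>\<^sub>E {- L j..L j}" using fL2 by (simp add: PiE_def extensional_def Pi_def)
    qed simp
    have cm: "\<bar>(x - z)$m\<bar> \<le> 1 / s" for m
    proof -
      have "(x - z)$m = (s * x$m - real_of_int (f m)) / s" using s0 by (simp add: z_def s_def field_simps)
      moreover have "0 \<le> s * x$m - real_of_int (f m)" "s * x$m - real_of_int (f m) \<le> 1" unfolding f_def by linarith+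
      ultimately show ?thesis using s0 by (simp add: divide_right_mono)
    qed
    have "dist x z \<le> (\<Sum>m\<in>UNIV. \<bar>(x - z)$m\<bar>)" unfolding dist_norm by (rule norm_le_l1_cart)
    also have "\<dots> \<le> (\<Sum>m\<in>(UNIV::'d set). 1 / s)" by (rule sum_mono) (rule cm)
    also have "\<dots> = D / s" by (simp add: D_def)
    also have "\<dots> \<le> 2^j / s" using Dj s0 by (simp add: divide_right_mono)
    also have "\<dots> = 2 powr (- (real a - 1) * real j)"
    proof -
      have "2 powr (- (real a - 1) * real j) = 2 powr (real j) / 2 powr (real (a*j))"
        by (simp add: powr_diff[symmetric] algebra_simps)
      moreover have "2 powr (real (a*j)) = (2::real)^(a*j)" by (rule powr_realpow) simp
      moreover have "2 powr (real j) = (2::real)^j" by (rule powr_realpow) simp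
      ultimately show ?thesis by (simp add: s_def)
    qed
    finally show "\<exists>j\<ge>J. \<exists>z\<in>Z j. dist x z \<le> 2 powr (- (real a - 1) * real j)"
      using jJ zZ by blast
  qed
qed

lemma coef_from:
  fixes x B w :: real and j :: nat
  assumes "x * 2 powr (w * j) \<le> B"
  shows "x \<le> B * 2 powr (- w * j)"
proof -
  define P where "P = (2::real) powr (w * j)"
  define Q where "Q = (2::real) powr (- w * j)"
  have "P * Q = 2 powr (w * j + - w * j)" unfolding P_def Q_def by (rule powr_add[symmetric])
  then have PQ: "P * Q = 1" by simp
  have "x * P * Q \<le> B * Q" using assms by (intro mult_right_mono) (auto simp: P_def Q_def)
  moreover have "x * P * Q = x" using PQ by (simp add: mult.assoc)
  ultimately have "x \<le> B * Q" by linarith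
  then show ?thesis by (simp add: Q_def)
qed

lemma inD_large:
  assumes "in_D N \<psi> c \<gamma> x" and "\<gamma>' \<le> \<gamma>"
  shows "\<exists>C>0. \<forall>J. \<exists>i j k. i \<in> {1..N} \<and> j \<ge> J \<and>
           C * 2 powr (\<gamma>' * real j) \<le> norm (c i j k) * norm (\<psi> i ((2::real)^j *\<^sub>R x - (\<chi> m. real_of_int (k $ m))))"
proof -
  obtain C idx where C: "C > 0" and i: "\<And>n. fst (idx n) \<in> {1..N}"
    and lim: "filterlim (\<lambda>n. fst (snd (idx n))) at_top sequentially"
    and b: "\<And>n. case idx n of (i, j, k) \<Rightarrow> norm (c i j k * wavelet \<psi> i j k x) \<ge> C * 2 powr (\<gamma> * real j)"
    using assms(1) unfolding in_D_def by blast
  have "\<exists>i j k. i \<in> {1..N} \<and> j \<ge> J \<and>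
           C * 2 powr (\<gamma>' * real j) \<le> norm (c i j k) * norm (\<psi> i ((2::real)^j *\<^sub>R x - (\<chi> m. real_of_int (k $ m))))" for J
  proof -
    have "eventually (\<lambda>n. J \<le> fst (snd (idx n))) sequentially"
      using lim unfolding filterlim_at_top by blast
    then obtain n where n: "J \<le> fst (snd (idx n))" unfolding eventually_sequentially by blast
    obtain i j k where ijk: "idx n = (i, j, k)" by (cases "idx n") auto
    have "C * 2 powr (\<gamma>' * real j) \<le> C * 2 powr (\<gamma> * real j)"
      using C assms(2) by (intro mult_left_mono) (auto intro: mult_right_mono)
    also have "\<dots> \<le> norm (c i j k * wavelet \<psi> i j k x)" using b[of n] ijk by simp
    finally show ?thesis using i[of n] n ijk
      by (intro exI[of _ i] exI[of _ j] exI[of _ k]) (auto simp: wavelet_def norm_mult)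
  qed
  then show ?thesis using C by blast
qed

theorem mainTheorem2:
  fixes \<psi> :: "nat \<Rightarrow> real^'d \<Rightarrow> complex"
    and c :: "nat \<Rightarrow> nat \<Rightarrow> int^'d \<Rightarrow> complex"
    and N :: nat and s :: real and p q :: ereal
  assumes "N \<ge> 1"
    and "\<And>i. i \<in> {1..N} \<Longrightarrow> bounded (range (\<psi> i))"
    and "\<And>i. i \<in> {1..N} \<Longrightarrow> fast_decay (\<psi> i)"
    and "0 < p" and "0 < q"
    and "in_besov s p q N c"
  shows "(\<forall>x. div_exp N \<psi> c x \<le> ereal (div_p CARD('d) p - s)) \<and>
         (\<forall>\<gamma>. -s \<le> \<gamma> \<and> \<gamma> \<le> -s + div_p CARD('d) p \<longrightarrow>
            hausdorff_dim {x. div_exp N \<psi> c x \<ge> ereal \<gamma>}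
              \<le> ereal (real CARD('d)) - p * ereal (s + \<gamma>))"
proof -
  note fd = assms(3) and p0 = assms(4) and q0 = assms(5)
  define D where "D = real CARD('d)"
  define w where "w = div_p CARD('d) p - s"
  define A0 where "A0 = {1..N} \<times> (UNIV :: (int^'d) set)"
  define fj where "fj j = (\<lambda>(i, k). norm (c i j k) * 2 powr ((s - div_p CARD('d) p) * real j))" for j
  have epsdef: "besov_eps s p N c j = lp_norm p (fj j) A0" for j
    unfolding besov_eps_def fj_def A0_def by simp
  have efin: "\<And>j. besov_eps s p N c j \<noteq> \<infinity>"
    and lpq: "lp_norm q (\<lambda>j. enn2real (besov_eps s p N c j)) UNIV \<noteq> \<infinity>"
    using assms(6) unfolding in_besov_def by auto
  obtain B0 where B0: "\<And>j. \<bar>enn2real (besov_eps s p N c j)\<bar> \<le> B0"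
    using lp_bounded[OF q0 lpq] by blast
  define B where "B = max B0 0"
  have Bnn: "B \<ge> 0" by (simp add: B_def)
  have epsB: "lp_norm p (fj j) A0 \<le> ennreal B" for j
  proof -
    have "besov_eps s p N c j = ennreal (enn2real (besov_eps s p N c j))"
      using efin[of j] by (simp add: ennreal_enn2real_if)
    also have "\<dots> \<le> ennreal B" using B0[of j] by (intro ennreal_leI) (simp add: B_def)
    finally show ?thesis by (simp add: epsdef)
  qed
  have fjB: "norm (c i j k) * 2 powr ((s - div_p CARD('d) p) * real j) \<le> B" if i: "i \<in> {1..N}" for i j k
  proof (cases "p = \<infinity>")
    case True
    have "\<bar>fj j (i,k)\<bar> \<le> B" using lp_inf_bound[of "fj j" A0 B "(i,k)"] epsB[of j] True Bnn i by (auto simp: A0_def)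
    then show ?thesis by (simp add: fj_def)
  next
    case False
    then obtain P where P: "p = ereal P" using p0 by (cases p) auto
    have P0: "P > 0" using p0 P by simp
    have "(\<Sum>a\<in>{(i,k)}. \<bar>fj j a\<bar> powr P) \<le> B powr P"
      using lp_finite_bound[of P "fj j" A0 B "{(i,k)}"] epsB[of j] P0 Bnn i unfolding P by (auto simp: A0_def)
    then have "\<bar>fj j (i,k)\<bar> powr P \<le> B powr P" by simp
    then have "\<bar>fj j (i,k)\<bar> \<le> B" using P0 Bnn
      by (meson abs_ge_zero not_le powr_less_mono2)
    then show ?thesis by (simp add: fj_def)
  qed
  have cb: "norm (c i j k) \<le> B * 2 powr (w * real j)" if "i \<in> {1..N}" for i j k
    using coef_from[OF fjB[OF that, of j k]] by (simp add: w_def)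
  define kv :: "int^'d \<Rightarrow> real^'d" where "kv k = (\<chi> m. real_of_int (k $ m))" for k
  have part1: "div_exp N \<psi> c x \<le> ereal w" for x
    unfolding div_exp_def
  proof (rule Sup_least)
    fix e assume "e \<in> {ereal \<gamma> | \<gamma>. in_D N \<psi> c \<gamma> x}"
    then obtain \<gamma> where e: "e = ereal \<gamma>" and inD: "in_D N \<psi> c \<gamma> x" by blast
    show "e \<le> ereal w"
    proof (rule ccontr)
      assume "\<not> e \<le> ereal w"
      then have gw: "\<gamma> > w" using e by simp
      obtain Cp where Cp1: "Cp \<ge> 1" and Cp: "\<And>i y. i \<in> {1..N} \<Longrightarrow> norm (\<psi> i y) \<le> Cp * (1 + norm y) powr (- 1)"
      proof -
        have "\<exists>C\<ge>1. \<forall>i\<in>{1..N}. \<forall>y. norm (\<psi> i y) \<le> C * (1 + norm y) powr (- 1)"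
          by (rule psi_unif) (use fd in auto)
        then show ?thesis using that by blast
      qed
      obtain C where C0: "C > 0" and CJ: "\<And>J. \<exists>i j k. i \<in> {1..N} \<and> j \<ge> J \<and>
           C * 2 powr (\<gamma> * real j) \<le> norm (c i j k) * norm (\<psi> i ((2::real)^j *\<^sub>R x - kv k))"
        using inD_large[OF inD order_refl] unfolding kv_def by blast
      obtain J0 where J0: "\<And>j. j \<ge> J0 \<Longrightarrow> B * Cp / C + 1 \<le> 2 powr ((\<gamma> - w) * real j)"
        using grows[of "\<gamma> - w" "B * Cp / C + 1"] gw by auto
      obtain i j k where i: "i \<in> {1..N}" and j: "j \<ge> J0"
        and h: "C * 2 powr (\<gamma> * real j) \<le> norm (c i j k) * norm (\<psi> i ((2::real)^j *\<^sub>R x - kv k))"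
        using CJ[of J0] by blast
      define y where "y = (2::real)^j *\<^sub>R x - kv k"
      have "(1 + norm y) powr (- 1) \<le> 1" using powr_mono[of "-1" 0 "1 + norm y"]
        by (simp add: add_nonneg_eq_0_iff)
      then have "Cp * (1 + norm y) powr (- 1) \<le> Cp * 1" using Cp1 by (intro mult_left_mono) auto
      then have psb: "norm (\<psi> i y) \<le> Cp" using Cp[OF i, of y] by linarith
      have "norm (c i j k) * norm (\<psi> i y) \<le> (B * 2 powr (w * real j)) * Cp"
        using cb[OF i, of j k] psb Bnn by (intro mult_mono) auto
      then have "C * 2 powr (\<gamma> * real j) \<le> (B * Cp) * 2 powr (w * real j)"
        using h unfolding y_def by (simp add: mult_ac)
      moreover have "2 powr (\<gamma> * real j) = 2 powr ((\<gamma> - w) * real j) * 2 powr (w * real j)"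
        by (simp add: powr_add[symmetric] algebra_simps)
      ultimately have "(C * 2 powr ((\<gamma> - w) * real j)) * 2 powr (w * real j) \<le> (B * Cp) * 2 powr (w * real j)"
        by (simp add: mult_ac)
      then have h2: "C * 2 powr ((\<gamma> - w) * real j) \<le> B * Cp" by simp
      have "C * (B * Cp / C + 1) \<le> C * 2 powr ((\<gamma> - w) * real j)"
        using J0[OF j] C0 by (intro mult_left_mono) auto
      then have "B * Cp + C \<le> C * 2 powr ((\<gamma> - w) * real j)" using C0 by (simp add: algebra_simps)
      then show False using h2 C0 by linarith
    qed
  qed
  have part2: "hausdorff_dim {x. div_exp N \<psi> c x \<ge> ereal \<gamma>} \<le> ereal (real CARD('d)) - p * ereal (s + \<gamma>)"
    if g1: "-s \<le> \<gamma>" and g2: "\<gamma> \<le> -s + div_p CARD('d) p" for \<gamma>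
  proof (cases "p = \<infinity>")
    case True
    then have "\<gamma> = -s" using g1 g2 by (simp add: div_p_def)
    then show ?thesis using True dim_le_card by simp
  next
    case False
    then obtain P where P: "p = ereal P" using p0 by (cases p) auto
    have P0: "P > 0" using p0 P by simp
    have dp: "div_p CARD('d) p = D / P" by (simp add: div_p_def P D_def)
    define r where "r = D - P * (s + \<gamma>)"
    have "s + \<gamma> \<le> D / P" using g2 dp by simp
    then have "P * (s + \<gamma>) \<le> D" using P0 by (simp add: le_divide_eq mult.commute)
    then have r0: "r \<ge> 0" by (simp add: r_def)
    have rhs: "ereal (real CARD('d)) - p * ereal (s + \<gamma>) = ereal r" by (simp add: P r_def D_def)
    show ?thesis unfolding rhs
    proof (rule dim_le[OF r0])
      fix t assume tr: "t > r"
      define \<sigma> where "\<sigma> = t - r"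
      have t0: "t > 0" using tr r0 by simp
      have \<sigma>0: "\<sigma> > 0" and \<sigma>t: "\<sigma> \<le> t" using tr r0 by (auto simp: \<sigma>_def)
      define g where "g = \<gamma> - \<sigma> / (4 * P)"
      define g' where "g' = \<gamma> - \<sigma> / (8 * P)"
      define \<epsilon> where "\<epsilon> = \<sigma> / (4 * t)"
      have \<epsilon>0: "\<epsilon> > 0" using \<sigma>0 t0 by (simp add: \<epsilon>_def)
      have \<epsilon>t: "\<epsilon> * t = \<sigma> / 4" using t0 by (simp add: \<epsilon>_def)
      have \<epsilon>1: "\<epsilon> < 1" using \<sigma>t t0 by (simp add: \<epsilon>_def divide_less_eq)
      have gg': "g' - g = \<sigma> / (8 * P)" by (simp add: g_def g'_def field_simps)
      have gg'0: "g' - g > 0" using gg' \<sigma>0 P0 by simp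
      have g'\<gamma>: "g' < \<gamma>" using \<sigma>0 P0 by (simp add: g'_def)
      define \<alpha> where "\<alpha> = D - s * P - g * P"
      have h\<alpha>: "\<alpha> = r + \<sigma> / 4" using P0 by (simp add: \<alpha>_def r_def g_def field_simps)
      define A where "A j = {(i, k). i \<in> {1..N} \<and> 2 powr (g * real j) \<le> norm (c i j k)}" for j
      define Z where "Z j = (\<lambda>(i, k). (1 / 2^j) *\<^sub>R kv k) ` A j" for j
      define K where "K = B powr P"
      have cntA: "finite (A j) \<and> real (card (A j)) \<le> K * 2 powr (\<alpha> * real j)" for j
      proof -
        define m where "m = (2 powr (g * real j) * 2 powr ((s - D / P) * real j)) powr P"
        have m0: "m > 0" by (simp add: m_def)
        have AA0: "A j \<subseteq> A0" by (auto simp: A_def A0_def)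
        have S: "(\<Sum>a\<in>F. \<bar>fj j a\<bar> powr P) \<le> K" if "finite F" "F \<subseteq> A j" for F
          using lp_finite_bound[of P "fj j" A0 B F] epsB[of j] P0 Bnn that AA0 unfolding P K_def by auto
        have lb: "m \<le> \<bar>fj j a\<bar> powr P" if aA: "a \<in> A j" for a
        proof -
          obtain i k where a: "a = (i, k)" "2 powr (g * real j) \<le> norm (c i j k)" using aA unfolding A_def by blast
          have "2 powr (g * real j) * 2 powr ((s - D / P) * real j) \<le> norm (c i j k) * 2 powr ((s - D / P) * real j)"
            using a(2) by (intro mult_right_mono) auto
          then have "m \<le> (norm (c i j k) * 2 powr ((s - D / P) * real j)) powr P"
            unfolding m_def using P0 by (intro powr_mono2) auto
          then show ?thesis using a dp by (simp add: fj_def)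
        qed
        have cbd: "finite (A j) \<and> real (card (A j)) \<le> K / m" by (rule count_bound[OF S lb m0])
        have "m = 2 powr (g * real j * P) * 2 powr ((s - D / P) * real j * P)"
          unfolding m_def by (simp add: powr_mult powr_powr)
        also have "\<dots> = 2 powr (g * real j * P + (s - D / P) * real j * P)" by (simp add: powr_add)
        also have "g * real j * P + (s - D / P) * real j * P = - (\<alpha> * real j)"
          using P0 by (simp add: \<alpha>_def field_simps)
        finally have "m = 2 powr (- (\<alpha> * real j))" .
        then have "K / m = K * 2 powr (\<alpha> * real j)" by (simp add: powr_minus divide_inverse)
        then show ?thesis using cbd by simp
      qed
      show "hausdorff_outer t {x. ereal \<gamma> \<le> div_exp N \<psi> c x} = 0"
      proof (rule cover_null[of Z K \<alpha> "1 - \<epsilon>"])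
        fix j
        show "finite (Z j)" using cntA[of j] by (simp add: Z_def)
        have "card (Z j) \<le> card (A j)" unfolding Z_def using cntA[of j] by (intro card_image_le) simp
        then show "real (card (Z j)) \<le> K * 2 powr (\<alpha> * real j)" using cntA[of j] by linarith
      next
        show "0 < 1 - \<epsilon>" using \<epsilon>1 by simp
      next
        show "0 < t" by (rule t0)
      next
        have "t * (1 - \<epsilon>) = t - \<epsilon> * t" by (simp add: algebra_simps)
        then show "\<alpha> < t * (1 - \<epsilon>)" using h\<alpha> \<epsilon>t \<sigma>0 \<sigma>_def by linarith
      next
        fix x J assume "x \<in> {x. ereal \<gamma> \<le> div_exp N \<psi> c x}"
        then have xg: "ereal \<gamma> \<le> Sup {ereal \<gamma> | \<gamma>. in_D N \<psi> c \<gamma> x}" by (simp add: div_exp_def)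
        have "ereal g' < Sup {ereal \<gamma> | \<gamma>. in_D N \<psi> c \<gamma> x}" using xg g'\<gamma>
          using less_le_trans[of "ereal g'" "ereal \<gamma>"] by simp
        then obtain \<gamma>1 where inD: "in_D N \<psi> c \<gamma>1 x" and g1': "g' < \<gamma>1" by (auto simp: less_Sup_iff)
        obtain C where C0: "C > 0" and CJ: "\<And>J. \<exists>i j k. i \<in> {1..N} \<and> j \<ge> J \<and>
             C * 2 powr (g' * real j) \<le> norm (c i j k) * norm (\<psi> i ((2::real)^j *\<^sub>R x - kv k))"
          using inD_large[OF inD, of g'] g1' unfolding kv_def by auto
        define n0 where "n0 = (\<bar>w - g'\<bar> + 1) / \<epsilon>"
        have n00: "n0 > 0" using \<epsilon>0 by (simp add: n0_def)
        have hn: "1 + (w - g') \<le> n0 * \<epsilon>" using \<epsilon>0 by (simp add: n0_def)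
        obtain Cp where Cp1: "Cp \<ge> 1" and Cp: "\<And>i y. i \<in> {1..N} \<Longrightarrow> norm (\<psi> i y) \<le> Cp * (1 + norm y) powr (- n0)"
        proof -
          have "\<exists>C\<ge>1. \<forall>i\<in>{1..N}. \<forall>y. norm (\<psi> i y) \<le> C * (1 + norm y) powr (- n0)"
            by (rule psi_unif) (use fd n00 in auto)
          then show ?thesis using that by blast
        qed
        obtain J1 where J1: "\<And>j. j \<ge> J1 \<Longrightarrow> B * Cp / C \<le> 2 powr (1 * real j)"
          using grows[of 1 "B * Cp / C"] by auto
        obtain J2 where J2: "\<And>j. j \<ge> J2 \<Longrightarrow> Cp / C \<le> 2 powr ((g' - g) * real j)"
          using grows[of "g' - g" "Cp / C"] gg'0 by auto
        obtain i j k where i: "i \<in> {1..N}" and j: "j \<ge> max J (max J1 J2)"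
          and h: "C * 2 powr (g' * real j) \<le> norm (c i j k) * norm (\<psi> i ((2::real)^j *\<^sub>R x - kv k))"
          using CJ[of "max J (max J1 J2)"] by blast
        define y where "y = (2::real)^j *\<^sub>R x - kv k"
        have ki: "2 powr (g * real j) \<le> norm (c i j k) \<and> 1 + norm y \<le> 2 powr (\<epsilon> * real j)"
        proof (rule key_ineq[where C=C and Cp=Cp and KK=B and nn=n0 and b="norm (\<psi> i y)" and g'=g' and w=w])
          show "C * 2 powr (g' * real j) \<le> norm (c i j k) * norm (\<psi> i y)" using h by (simp add: y_def)
          show "norm (c i j k) \<le> B * 2 powr (w * real j)" by (rule cb[OF i])
          show "norm (\<psi> i y) \<le> Cp * (1 + norm y) powr (- n0)" by (rule Cp[OF i])
          show "B * Cp / C \<le> 2 powr (1 * real j)" using J1 j by simp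
          show "Cp / C \<le> 2 powr ((g' - g) * real j)" using J2 j by simp
        qed (use C0 Cp1 Bnn n00 hn in auto)
        have zZ: "(1 / 2^j) *\<^sub>R kv k \<in> Z j"
          unfolding Z_def by (rule image_eqI[of _ _ "(i, k)"]) (use ki i in \<open>auto simp: A_def\<close>)
        have "x - (1 / 2^j) *\<^sub>R kv k = (1 / 2^j) *\<^sub>R y"
          by (simp add: y_def scaleR_right_diff_distrib)
        then have "dist x ((1 / 2^j) *\<^sub>R kv k) = (1 / 2^j) * norm y" by (simp add: dist_norm)
        also have "\<dots> \<le> (1 / 2^j) * 2 powr (\<epsilon> * real j)" using ki by (intro mult_left_mono) auto
        also have "\<dots> = 2 powr (- (1 - \<epsilon>) * real j)"
        proof -
          have "(1::real) / 2^j = 2 powr (- real j)" by (simp add: powr_minus powr_realpow divide_inverse)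
          moreover have "(2::real) powr (- real j) * 2 powr (\<epsilon> * real j) = 2 powr (- real j + \<epsilon> * real j)"
            by (rule powr_add[symmetric])
          ultimately have "(1 / 2^j) * 2 powr (\<epsilon> * real j) = 2 powr (- real j + \<epsilon> * real j)"
            by simp
          then show ?thesis by (simp add: algebra_simps)
        qed
        finally show "\<exists>j\<ge>J. \<exists>z\<in>Z j. dist x z \<le> 2 powr (- (1 - \<epsilon>) * real j)"
          using zZ j by auto
      qed
    qed
  qed
  show ?thesis using part1 part2 by (simp add: w_def)
qed

end
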